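(* If $X$ is a non-scattered Tychonoff space, then its Stone–Čech compactification $\beta X$ is not a $\Delta$-space.
   Context: A space is scattered if every nonempty subset has a point isolated in that subset. A topological space $X$ is a $\Delta$-space if for every decreasing sequence $\{D_n:n\in\omega\}$ of subsets of $X$ with $\bigcap_n D_n=\emptyset$ there is a decreasing sequence $\{V_n:n\in\omega\}$ of open subsets of $X$ with $D_n\subseteq V_n$ for all $n$ and $\bigcap_n V_n=\emptyset$. *)

theory Defs
  imports "HOL-Analysis.Analysis"
begin

definition tychonoff_space :: "'a topology \<Rightarrow> bool" where
  "tychonoff_space X \<longleftrightarrow> completely_regular_space X \<and> Hausdorff_space X"

definition scattered_space :: "'a topology \<Rightarrow> bool" where
  "scattered_space X \<longleftrightarrow>
     (\<forall>S. S \<subseteq> topspace X \<and> S \<noteq> {} \<longrightarrow>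
        (\<exists>x\<in>S. \<exists>U. openin X U \<and> U \<inter> S = {x}))"

definition delta_space :: "'a topology \<Rightarrow> bool" where
  "delta_space X \<longleftrightarrow>
     (\<forall>D :: nat \<Rightarrow> 'a set.
        (\<forall>n. D n \<subseteq> topspace X) \<and> (\<forall>n. D (Suc n) \<subseteq> D n) \<and> (\<Inter>n. D n) = {} \<longrightarrow>
        (\<exists>V :: nat \<Rightarrow> 'a set. (\<forall>n. openin X (V n)) \<and> (\<forall>n. V (Suc n) \<subseteq> V n) \<and>
            (\<forall>n. D n \<subseteq> V n) \<and> (\<Inter>n. V n) = {}))"

definition stone_cech_compactification :: "'a topology \<Rightarrow> 'b topology \<Rightarrow> ('a \<Rightarrow> 'b) \<Rightarrow> bool" where
  "stone_cech_compactification X Y e \<longleftrightarrow>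
     compact_space Y \<and> Hausdorff_space Y \<and>
     embedding_map X Y e \<and> Y closure_of (e ` topspace X) = topspace Y \<and>
     (\<forall>f. continuous_map X euclideanreal f \<and> bounded (f ` topspace X) \<longrightarrow>
        (\<exists>g. continuous_map Y euclideanreal g \<and> (\<forall>x\<in>topspace X. g (e x) = f x)))"

end

theory Submission
  imports Defs
begin

lemma reg_shrink:
  assumes "regular_space Y" "openin Y U" "x \<in> U"
  shows "\<exists>W. openin Y W \<and> x \<in> W \<and> Y closure_of W \<subseteq> U"
proof -
  have "closedin Y (topspace Y - U)" "x \<in> topspace Y - (topspace Y - U)"
    using assms openin_subset by (auto simp: closedin_diff)
  then obtain W where "openin Y W" "x \<in> W" "disjnt (topspace Y - U) (Y closure_of W)"
    using assms(1) unfolding regular_space by blast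
  then show ?thesis using closure_of_subset_topspace[of Y W]
    by (auto simp: disjnt_def)
qed

lemma split_lemma:
  assumes Y: "compact_space Y" "Hausdorff_space Y"
    and S: "\<forall>y\<in>S. \<forall>W. openin Y W \<longrightarrow> W \<inter> S \<noteq> {y}"
    and U: "openin Y U" "U \<inter> S \<noteq> {}"
  shows "\<exists>U0 U1. openin Y U0 \<and> openin Y U1 \<and> U0 \<inter> S \<noteq> {} \<and> U1 \<inter> S \<noteq> {}
     \<and> Y closure_of U0 \<subseteq> U \<and> Y closure_of U1 \<subseteq> U
     \<and> disjnt (Y closure_of U0) (Y closure_of U1)"
proof -
  have R: "regular_space Y" using Y compact_Hausdorff_imp_regular_space by blast
  obtain x where x: "x \<in> U" "x \<in> S" using U by blast
  have "U \<inter> S \<noteq> {x}" using S x U by blast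
  then obtain y where y: "y \<in> U" "y \<in> S" "y \<noteq> x" using x by blast
  have "x \<in> topspace Y" "y \<in> topspace Y" using x y U openin_subset by auto
  then obtain Ox Oy where O: "openin Y Ox" "openin Y Oy" "x \<in> Ox" "y \<in> Oy" "disjnt Ox Oy"
    using Y(2) y unfolding Hausdorff_space_def by metis
  obtain Wx where Wx: "openin Y Wx" "x \<in> Wx" "Y closure_of Wx \<subseteq> U \<inter> Ox"
    using reg_shrink[OF R, of "U \<inter> Ox" x] O U x by blast
  obtain Wy where Wy: "openin Y Wy" "y \<in> Wy" "Y closure_of Wy \<subseteq> U \<inter> Oy"
    using reg_shrink[OF R, of "U \<inter> Oy" y] O U y by blast
  show ?thesis
    apply (rule exI[of _ Wx], rule exI[of _ Wy])
    using Wx Wy x y O by (auto simp: disjnt_def)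
qed

lemma crowded_not_delta:
  fixes Y :: "'b topology" and S :: "'b set"
  assumes Y: "compact_space Y" "Hausdorff_space Y"
    and Ssub: "S \<subseteq> topspace Y" and Sne: "S \<noteq> {}"
    and S: "\<forall>y\<in>S. \<forall>W. openin Y W \<longrightarrow> W \<inter> S \<noteq> {y}"
  shows "\<not> delta_space Y"
proof
  assume delta: "delta_space Y"
  define P where "P U \<longleftrightarrow> openin Y U \<and> U \<inter> S \<noteq> {}" for U
  define Q where "Q U U0 U1 \<longleftrightarrow> P U0 \<and> P U1 \<and> Y closure_of U0 \<subseteq> U \<and> Y closure_of U1 \<subseteq> U
     \<and> disjnt (Y closure_of U0) (Y closure_of U1)" for U U0 U1
  have "\<forall>U. \<exists>p. P U \<longrightarrow> Q U (fst p) (snd p)"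
  proof
    fix U show "\<exists>p. P U \<longrightarrow> Q U (fst p) (snd p)"
    proof (cases "P U")
      case True
      then obtain U0 U1 where "openin Y U0 \<and> openin Y U1 \<and> U0 \<inter> S \<noteq> {} \<and> U1 \<inter> S \<noteq> {}
     \<and> Y closure_of U0 \<subseteq> U \<and> Y closure_of U1 \<subseteq> U
     \<and> disjnt (Y closure_of U0) (Y closure_of U1)"
        using split_lemma[OF Y S, of U] unfolding P_def by blast
      then show ?thesis unfolding Q_def P_def by (intro exI[of _ "(U0,U1)"]) simp
    qed simp
  qed
  then obtain g0 where g0: "\<forall>U. P U \<longrightarrow> Q U (fst (g0 U)) (snd (g0 U))"
    using choice[of "\<lambda>U p. P U \<longrightarrow> Q U (fst p) (snd p)"] by blast
  have g: "\<And>U. P U \<Longrightarrow> Q U (fst (g0 U)) (snd (g0 U))" using g0 by blast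
  define g where "g = g0"
  note g = g[folded g_def]
  define spl where "spl U i = (if i then fst (g U) else snd (g U))" for U and i :: bool
  define T where "T s = foldl spl (topspace Y) s" for s
  have T_snoc: "T (s @ [i]) = spl (T s) i" for s i by (simp add: T_def)
  have PT: "P (T s)" for s
  proof (induction s rule: rev_induct)
    case Nil then show ?case using Ssub Sne by (simp add: T_def P_def Int_absorb1)
  next
    case (snoc i s) then show ?case using g[of "T s"] by (simp add: T_snoc spl_def Q_def)
  qed
  define F where "F s = Y closure_of T s" for s
  have Fclo: "closedin Y (F s)" for s by (simp add: F_def)
  have Fne: "F s \<noteq> {}" for s
    using PT[of s] closure_of_subset[of "T s" Y] openin_subset[of Y "T s"]
    by (auto simp: F_def P_def)
  have Fsub: "F (s @ [i]) \<subseteq> F s" for s i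
    using g[OF PT[of s]] closure_of_subset[of "T s" Y] openin_subset[of Y "T s"] PT[of s]
    by (auto simp: F_def T_snoc spl_def Q_def P_def)
  have Fdis: "disjnt (F (s @ [True])) (F (s @ [False]))" for s
    using g[OF PT[of s]] by (simp add: F_def T_snoc spl_def Q_def)
  define pr where "pr b k = map b [0..<k]" for b :: "nat \<Rightarrow> bool" and k
  have pr_Suc: "pr b (Suc k) = pr b k @ [b k]" for b k by (simp add: pr_def)
  have dec: "decseq (\<lambda>k. F (pr b k))" for b
    by (rule decseq_SucI) (simp add: pr_Suc Fsub)
  define A where "A b = (\<Inter>k. F (pr b k))" for b
  have Ane: "A b \<noteq> {}" for b
    unfolding A_def by (rule compact_space_imp_nest[OF Y(1) Fclo Fne dec])
  have Asub: "A b \<subseteq> F (pr b k)" for b k by (auto simp: A_def)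
  have Aopen: "\<exists>k. F (pr b k) \<subseteq> V" if "openin Y V" "A b \<subseteq> V" for b V
  proof (rule ccontr)
    assume "\<not> ?thesis"
    then have ne: "F (pr b k) - V \<noteq> {}" for k by blast
    have "(\<Inter>k. F (pr b k) - V) \<noteq> {}"
    proof (rule compact_space_imp_nest[OF Y(1)])
      show "closedin Y (F (pr b k) - V)" for k using Fclo that(1) by (simp add: closedin_diff)
      show "F (pr b k) - V \<noteq> {}" for k by (rule ne)
      show "decseq (\<lambda>k. F (pr b k) - V)" using dec[of b] by (auto simp: decseq_def)
    qed
    then show False using that(2) by (auto simp: A_def)
  qed
  have Adis: "A b \<inter> A b' = {}" if neq: "b \<noteq> b'" for b b'
  proof -
    obtain j0 where "b j0 \<noteq> b' j0" using neq by (auto simp: fun_eq_iff)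
    define j where "j = (LEAST j. b j \<noteq> b' j)"
    have bj: "b j \<noteq> b' j" unfolding j_def by (rule LeastI) fact
    have "pr b j = pr b' j" unfolding pr_def
      by (rule map_cong) (auto simp: j_def dest: not_less_Least)
    then have "A b \<subseteq> F (pr b j @ [b j])" "A b' \<subseteq> F (pr b j @ [b' j])"
      using Asub[of b "Suc j"] Asub[of b' "Suc j"] by (simp_all add: pr_Suc)
    moreover have "disjnt (F (pr b j @ [b j])) (F (pr b j @ [b' j]))"
      using Fdis[of "pr b j"] bj by (cases "b j") (auto simp: disjnt_sym)
    ultimately show ?thesis by (auto simp: disjnt_def)
  qed
  define pad where "pad t = (\<lambda>i. if i < length t then t ! i else False)" for t :: "bool list"
  have pr_pad: "pr (pad (s @ w)) (length s) = s" for s w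
  proof -
    have "map (pad (s @ w)) [0..<length s] = map ((!) s) [0..<length s]"
      by (rule map_cong) (auto simp: pad_def nth_append)
    then show ?thesis by (simp add: pr_def map_nth)
  qed
  define D where "D n = \<Union>{A (pad t) | t. t \<noteq> [] \<and> last t \<and> n \<le> length t}" for n
  have Dtop: "D n \<subseteq> topspace Y" for n
  proof -
    have "A b \<subseteq> topspace Y" for b using Asub[of b 0] closure_of_subset_topspace[of Y] unfolding F_def by blast
    then show ?thesis unfolding D_def by blast
  qed
  have Ddec: "D (Suc n) \<subseteq> D n" for n unfolding D_def by (intro Union_mono) auto
  have Dint: "(\<Inter>n. D n) = {}"
  proof (rule ccontr)
    assume "(\<Inter>n. D n) \<noteq> {}"
    then obtain x where x: "\<And>n. x \<in> D n" by blast
    obtain t0 where t0: "t0 \<noteq> []" "last t0" "x \<in> A (pad t0)"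
      using x[of 0] unfolding D_def by blast
    obtain t1 where t1: "t1 \<noteq> []" "last t1" "Suc (length t0) \<le> length t1" "x \<in> A (pad t1)"
      using x[of "Suc (length t0)"] unfolding D_def by blast
    have "pad t0 = pad t1" using Adis t0(3) t1(4) by blast
    moreover have "pad t1 (length t1 - 1)"
      using t1 by (simp add: pad_def last_conv_nth)
    moreover have "\<not> (length t1 - 1 < length t0)" using t1(3) by simp
    then have "\<not> pad t0 (length t1 - 1)" unfolding pad_def by (simp only: if_False not_False_eq_True)
    ultimately show False by simp
  qed
  obtain V where V: "\<And>n. openin Y (V n)" "\<And>n. D n \<subseteq> V n" "(\<Inter>n. V n) = {}"
    using delta Dtop Ddec Dint unfolding delta_space_def by metis
  have nxt: "\<exists>s'. length s < length s' \<and> take (length s) s' = s \<and> F s' \<subseteq> V n" for s n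
  proof -
    define t where "t = s @ (replicate n False @ [True])"
    have "t \<noteq> [] \<and> last t \<and> n \<le> length t" by (simp add: t_def)
    then have "A (pad t) \<subseteq> D n" unfolding D_def by blast
    then have "A (pad t) \<subseteq> V n" using V(2) by blast
    then obtain k where k: "F (pr (pad t) k) \<subseteq> V n" using Aopen V(1) by blast
    define k' where "k' = max k (Suc (length s))"
    have "F (pr (pad t) k') \<subseteq> F (pr (pad t) k)" using dec[of "pad t"] unfolding k'_def decseq_def by auto
    moreover have "take (length s) (pr (pad t) k') = s"
      using pr_pad[of s "replicate n False @ [True]"]
      by (simp add: pr_def k'_def take_map t_def)
    ultimately show ?thesis using k by (intro exI[of _ "pr (pad t) k'"]) (auto simp: pr_def k'_def)
  qed
  then obtain nx where nx: "\<And>s n. length s < length (nx s n) \<and> take (length s) (nx s n) = s \<and> F (nx s n) \<subseteq> V n"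
    by metis
  define ss where "ss = rec_nat [] (\<lambda>n s. nx s n)"
  have ss0: "ss 0 = []" and ssS: "ss (Suc n) = nx (ss n) n" for n by (simp_all add: ss_def)
  have sslen: "n \<le> length (ss n)" for n
    by (induction n) (simp_all add: ssS ss0 less_eq_Suc_le[symmetric] nx order.strict_trans1)
  have sspre: "take (length (ss m)) (ss n) = ss m \<and> length (ss m) \<le> length (ss n)" if "m \<le> n" for m n
    using that
  proof (induction n rule: dec_induct)
    case base then show ?case by simp
  next
    case (step n)
    have a: "take (length (ss n)) (ss (Suc n)) = ss n" "length (ss n) < length (ss (Suc n))"
      using nx[of "ss n" n] by (simp_all add: ssS)
    have "take (length (ss m)) (ss (Suc n)) = take (length (ss m)) (take (length (ss n)) (ss (Suc n)))"
      using step.IH by (simp add: min_absorb1)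
    then show ?case using a step.IH by simp
  qed
  define c where "c i = ss (Suc i) ! i" for i
  have cnth: "c i = ss n ! i" if i: "i < length (ss n)" for n i
  proof -
    define M where "M = max n (Suc i)"
    have nM: "n \<le> M" and iM: "Suc i \<le> M" by (simp_all add: M_def)
    have e1: "take (length (ss n)) (ss M) = ss n" using sspre[OF nM] by blast
    have e2: "take (length (ss (Suc i))) (ss M) = ss (Suc i)" using sspre[OF iM] by blast
    have i2: "i < length (ss (Suc i))" using sslen[of "Suc i"] by simp
    have "ss n ! i = ss M ! i"
      using nth_take[OF i, of "ss M"] e1 by simp
    moreover have "ss (Suc i) ! i = ss M ! i"
      using nth_take[OF i2, of "ss M"] e2 by simp
    ultimately show ?thesis by (simp add: c_def)
  qed
  have prc: "pr c (length (ss n)) = ss n" for n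
  proof -
    have "map c [0..<length (ss n)] = map ((!) (ss n)) [0..<length (ss n)]"
      by (rule map_cong[OF refl], rule cnth, simp)
    then show ?thesis by (simp add: pr_def map_nth)
  qed
  have "A c \<subseteq> V n" for n
    using Asub[of c "length (ss (Suc n))"] prc[of "Suc n"] nx[of "ss n" n] by (simp add: ssS) (meson order_trans)
  then have "A c \<subseteq> (\<Inter>n. V n)" by blast
  then show False using V(3) Ane[of c] by blast
qed

theorem corollary3p15:
  fixes X :: "'a topology" and Y :: "'b topology" and e :: "'a \<Rightarrow> 'b"
  assumes "tychonoff_space X"
    and "\<not> scattered_space X"
    and "stone_cech_compactification X Y e"
  shows "\<not> delta_space Y"
proof -
  have sc: "compact_space Y \<and> Hausdorff_space Y \<and> embedding_map X Y e"
    using assms(3) unfolding stone_cech_compactification_def by (elim conjE) (intro conjI; assumption)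
  then have Y: "compact_space Y" "Hausdorff_space Y" and emb: "embedding_map X Y e"
    by simp_all
  have hm: "homeomorphic_map X (subtopology Y (e ` topspace X)) e"
    using emb unfolding embedding_map_def .
  have cont: "continuous_map X Y e"
    using homeomorphic_imp_continuous_map[OF hm] continuous_map_in_subtopology by blast
  have inj: "inj_on e (topspace X)" using homeomorphic_imp_injective_map[OF hm] .
  have "\<exists>S. S \<subseteq> topspace X \<and> S \<noteq> {} \<and> \<not> (\<exists>x\<in>S. \<exists>U. openin X U \<and> U \<inter> S = {x})"
    using assms(2) unfolding scattered_space_def by (simp only: not_all not_imp conj_assoc)
  then obtain S where S: "S \<subseteq> topspace X" "S \<noteq> {}"
    and iso0: "\<not> (\<exists>x\<in>S. \<exists>U. openin X U \<and> U \<inter> S = {x})"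
    by (elim exE conjE)
  have iso: "U \<inter> S \<noteq> {x}" if "x \<in> S" "openin X U" for x U
    using iso0 that by blast
  have "\<forall>y\<in>e ` S. \<forall>W. openin Y W \<longrightarrow> W \<inter> e ` S \<noteq> {y}"
  proof (intro ballI allI impI)
    fix y W assume y: "y \<in> e ` S" and W: "openin Y W"
    then obtain x where x: "x \<in> S" "y = e x" by blast
    show "W \<inter> e ` S \<noteq> {y}"
    proof
      assume eq: "W \<inter> e ` S = {y}"
      have op: "openin X {z \<in> topspace X. e z \<in> W}"
        using cont W by (rule openin_continuous_map_preimage)
      have "{z \<in> topspace X. e z \<in> W} \<inter> S = {x}"
      proof
        show "{z \<in> topspace X. e z \<in> W} \<inter> S \<subseteq> {x}"
        proof
          fix z assume z: "z \<in> {z \<in> topspace X. e z \<in> W} \<inter> S"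
          then have "e z \<in> W \<inter> e ` S" by blast
          then have "e z = e x" using eq x by blast
          moreover have "z \<in> topspace X" "x \<in> topspace X" using z x S by auto
          ultimately have "z = x" using inj unfolding inj_on_def by blast
          then show "z \<in> {x}" by simp
        qed
        have "e x \<in> W" using eq x by blast
        then show "{x} \<subseteq> {z \<in> topspace X. e z \<in> W} \<inter> S"
          using x S by blast
      qed
      then show False using iso[OF x(1) op] by blast
    qed
  qed
  moreover have "e ` S \<subseteq> topspace Y"
    using S(1) continuous_map_image_subset_topspace[OF cont] by blast
  moreover have "e ` S \<noteq> {}" using S(2) by blast
  ultimately show ?thesis
    using crowded_not_delta[OF Y(1) Y(2)] by blast
qed

end
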